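(* Let $m\geq2$. Then a graph $G$ is minor maximal amongst graphs with $n$ vertices, at most $m$ parallel edges between any given pair of vertices, and spectator floor $n-1$, if and only if $G$ is an $m$-saturated crowded $1$-parade, i.e., every pair of its $n$ vertices is joined by exactly $m$ edges.
   Context: All graphs are finite, have at least one vertex, have no loops, and may have multiple (parallel) edges. A minor of $H$ is any graph obtained from $H$ by a sequence of: deleting an isolated vertex, deleting an edge, contracting an edge that has no edge parallel to it. A graph $G$ in a class $\mathcal{C}$ is minor maximal in $\mathcal{C}$ if no graph in $\mathcal{C}$ other than $G$ has $G$ as a minor. An $m$-saturated crowded $1$-parade is a graph in which every pair of vertices is joined by exactly $m$ edges. A unique shortest path is a shortest $u$–$v$ path $P$ such that every $u$–$v$ path with the same number of vertices is identical to $P$, where two paths with different edge sequences are different even if their vertex sequences agree; a single vertex is a unique shortest path. The parade number $\mathrm{usp}(G)$ is the largest number of vertices of a unique shortest path in $G$. The spectator number is $\mathrm{sp}(G)=|V(G)|-\mathrm{usp}(G)$. The spectator floor $\lfloor \mathrm{sp}\rfloor(G)$ is the minimum of $\mathrm{sp}(H)$ over all graphs $H$ of which $G$ is a minor. *)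

theory Defs
  imports Main
begin

text \<open>Finite loopless multigraphs, represented (up to isomorphism) by a vertex set
and an edge-multiplicity function: mult u v = number of parallel edges joining u and v.\<close>

record mgraph =
  verts :: "nat set"
  mult :: "nat \<Rightarrow> nat \<Rightarrow> nat"

definition wf_graph :: "mgraph \<Rightarrow> bool" where
  "wf_graph G \<longleftrightarrow> finite (verts G) \<and> verts G \<noteq> {} \<and>
     (\<forall>u v. mult G u v = mult G v u) \<and> (\<forall>u. mult G u u = 0) \<and>
     (\<forall>u v. mult G u v > 0 \<longrightarrow> u \<in> verts G \<and> v \<in> verts G)"

definition iso :: "mgraph \<Rightarrow> mgraph \<Rightarrow> bool" where
  "iso G H \<longleftrightarrow> (\<exists>f. bij_betw f (verts G) (verts H) \<and>
     (\<forall>x\<in>verts G. \<forall>y\<in>verts G. mult H (f x) (f y) = mult G x y))"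

definition contract :: "mgraph \<Rightarrow> nat \<Rightarrow> nat \<Rightarrow> mgraph" where
  "contract G u v = \<lparr> verts = verts G - {v},
     mult = (\<lambda>x y. if x = v \<or> y = v \<or> x = y then 0
                   else mult G x y + (if x = u then mult G v y else 0)
                                   + (if y = u then mult G x v else 0)) \<rparr>"

inductive minor_step :: "mgraph \<Rightarrow> mgraph \<Rightarrow> bool" where
  del_vertex: "\<lbrakk> v \<in> verts G; \<forall>w. mult G v w = 0; verts G - {v} \<noteq> {} \<rbrakk>
     \<Longrightarrow> minor_step G \<lparr> verts = verts G - {v}, mult = mult G \<rparr>"
| del_edge: "\<lbrakk> mult G u v > 0 \<rbrakk>
     \<Longrightarrow> minor_step G \<lparr> verts = verts G,
           mult = (\<lambda>x y. if (x = u \<and> y = v) \<or> (x = v \<and> y = u) then mult G x y - 1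
                          else mult G x y) \<rparr>"
| contr_edge: "\<lbrakk> mult G u v = 1 \<rbrakk> \<Longrightarrow> minor_step G (contract G u v)"

definition is_minor :: "mgraph \<Rightarrow> mgraph \<Rightarrow> bool" where
  "is_minor G H \<longleftrightarrow> (\<exists>G'. minor_step\<^sup>*\<^sup>* H G' \<and> iso G' G)"

definition is_path :: "mgraph \<Rightarrow> nat list \<Rightarrow> bool" where
  "is_path G p \<longleftrightarrow> p \<noteq> [] \<and> distinct p \<and> set p \<subseteq> verts G \<and>
     (\<forall>i. Suc i < length p \<longrightarrow> mult G (p ! i) (p ! Suc i) > 0)"

text \<open>A unique shortest path: shortest among paths with the same ends, the only
vertex sequence of that length between these ends, and every consecutive pair
joined by exactly one edge (so the edge sequence is also unique).\<close>
definition usp_path :: "mgraph \<Rightarrow> nat list \<Rightarrow> bool" where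
  "usp_path G p \<longleftrightarrow> is_path G p \<and>
     (\<forall>q. is_path G q \<and> hd q = hd p \<and> last q = last p \<longrightarrow> length p \<le> length q) \<and>
     (\<forall>q. is_path G q \<and> hd q = hd p \<and> last q = last p \<and> length q = length p \<longrightarrow> q = p) \<and>
     (\<forall>i. Suc i < length p \<longrightarrow> mult G (p ! i) (p ! Suc i) = 1)"

definition usp :: "mgraph \<Rightarrow> nat" where
  "usp G = Max (length ` {p. usp_path G p})"

definition sp :: "mgraph \<Rightarrow> nat" where
  "sp G = card (verts G) - usp G"

definition sp_floor :: "mgraph \<Rightarrow> nat" where
  "sp_floor G = (LEAST k. \<exists>H. wf_graph H \<and> is_minor G H \<and> sp H = k)"

definition in_class :: "nat \<Rightarrow> nat \<Rightarrow> mgraph \<Rightarrow> bool" where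
  "in_class n m G \<longleftrightarrow> wf_graph G \<and> card (verts G) = n \<and>
     (\<forall>u v. mult G u v \<le> m) \<and> sp_floor G = n - 1"

definition minor_maximal :: "nat \<Rightarrow> nat \<Rightarrow> mgraph \<Rightarrow> bool" where
  "minor_maximal n m G \<longleftrightarrow> in_class n m G \<and>
     (\<forall>H. in_class n m H \<and> is_minor G H \<longrightarrow> iso H G)"

definition saturated_parade :: "nat \<Rightarrow> mgraph \<Rightarrow> bool" where
  "saturated_parade m G \<longleftrightarrow>
     (\<forall>u\<in>verts G. \<forall>v\<in>verts G. u \<noteq> v \<longrightarrow> mult G u v = m)"

end

theory Submission imports Defs begin

lemma wf_step: "minor_step A B \<Longrightarrow> wf_graph A \<Longrightarrow> wf_graph B"
proof (induction rule: minor_step.induct)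
  case (del_vertex v G)
  have s: "\<And>x y. mult G x y = mult G y x" and p: "\<And>x y. mult G x y > 0 \<Longrightarrow> x \<in> verts G \<and> y \<in> verts G"
    using del_vertex(4) unfolding wf_graph_def by blast+
  have "\<And>x y. mult G x y > 0 \<Longrightarrow> x \<noteq> v \<and> y \<noteq> v" using del_vertex(2) s by (metis less_irrefl)
  then show ?case using del_vertex p unfolding wf_graph_def by auto
next
  case (del_edge G u v)
  have p: "\<And>x y. mult G x y > 0 \<Longrightarrow> x \<in> verts G \<and> y \<in> verts G"
    using del_edge(2) unfolding wf_graph_def by blast
  have q: "\<And>x y. (if (x = u \<and> y = v) \<or> (x = v \<and> y = u) then mult G x y - 1 else mult G x y) > 0
     \<Longrightarrow> mult G x y > 0" by (auto split: if_splits)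
  have s: "\<And>x y. mult G x y = mult G y x" and i: "\<And>x. mult G x x = 0"
    using del_edge(2) unfolding wf_graph_def by blast+
  let ?M = "\<lambda>x y. (if (x = u \<and> y = v) \<or> (x = v \<and> y = u) then mult G x y - 1 else mult G x y)"
  have "?M x y = ?M y x" for x y using s by auto
  moreover have "?M x x = 0" for x using i by auto
  moreover have "?M x y > 0 \<Longrightarrow> x \<in> verts G \<and> y \<in> verts G" for x y using p q by blast
  ultimately show ?case using del_edge(2) unfolding wf_graph_def mgraph.simps by blast
next
  case (contr_edge G u v)
  have s: "\<And>x y. mult G x y = mult G y x" and p: "\<And>x y. mult G x y > 0 \<Longrightarrow> x \<in> verts G \<and> y \<in> verts G"
    and i: "\<And>x. mult G x x = 0" and f: "finite (verts G)"
    using contr_edge(2) unfolding wf_graph_def by blast+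
  have uv: "u \<noteq> v" "u \<in> verts G" "v \<in> verts G" using contr_edge(1) i p[of u v] by auto
  let ?M = "mult (contract G u v)"
  have M: "?M x y = (if x = v \<or> y = v \<or> x = y then 0
                   else mult G x y + (if x = u then mult G v y else 0)
                                   + (if y = u then mult G x v else 0))" for x y
    unfolding contract_def by simp
  have S1: "?M x y = ?M y x" for x y unfolding M using s by auto
  have S2: "?M x x = 0" for x unfolding M by simp
  have S3: "x \<in> verts G - {v} \<and> y \<in> verts G - {v}" if "?M x y > 0" for x y
  proof -
    have xy: "x \<noteq> v" "y \<noteq> v" "x \<noteq> y" using that unfolding M by (auto split: if_splits)
    have "mult G x y > 0 \<or> (x = u \<and> mult G v y > 0) \<or> (y = u \<and> mult G x v > 0)"
      using that xy unfolding M by (auto split: if_splits)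
    then show ?thesis using xy p uv by blast
  qed
  have V: "verts (contract G u v) = verts G - {v}" unfolding contract_def by simp
  have "finite (verts G - {v})" "verts G - {v} \<noteq> {}" using f uv by auto
  then show ?case unfolding wf_graph_def V using S1 S2 S3 by blast
qed

lemma steps_inv: "minor_step\<^sup>*\<^sup>* A B \<Longrightarrow> wf_graph A \<Longrightarrow>
  wf_graph B \<and> verts B \<subseteq> verts A \<and> (verts B = verts A \<longrightarrow> (\<forall>x y. mult B x y \<le> mult A x y))"
proof (induction rule: rtranclp_induct)
  case base
  then show ?case by auto
next
  case (step B C)
  then have wB: "wf_graph B" and sub: "verts B \<subseteq> verts A"
    and le: "verts B = verts A \<longrightarrow> (\<forall>x y. mult B x y \<le> mult A x y)" by auto
  have wC: "wf_graph C" using wf_step step(2) wB by blast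
  from step(2) show ?case
  proof cases
    case (del_vertex v)
    then show ?thesis using wC sub by auto
  next
    case (del_edge u v)
    then show ?thesis using wC sub le by (auto intro: le_trans[OF diff_le_self])
  next
    case (contr_edge u v)
    have "v \<in> verts B" using contr_edge wB unfolding wf_graph_def by (metis zero_less_one)
    then show ?thesis using wC sub contr_edge unfolding contract_def by auto
  qed
qed


lemma usp_single: assumes "v \<in> verts G" shows "usp_path G [v]"
proof -
  have a: "q = [v]" if "q \<noteq> []" "hd q = v" "length q = 1" for q :: "nat list"
    using that by (cases q) auto
  have b: "1 \<le> length q" if "q \<noteq> []" for q :: "nat list" using that by (cases q) auto
  have p: "is_path G [v]" unfolding is_path_def using assms by simp
  show ?thesis unfolding usp_path_def
  proof (intro conjI allI impI)
    show "is_path G [v]" by (rule p)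
  next
    fix q assume "is_path G q \<and> hd q = hd [v] \<and> last q = last [v]"
    then show "length [v] \<le> length q" using b unfolding is_path_def by simp
  next
    fix q assume h: "is_path G q \<and> hd q = hd [v] \<and> last q = last [v] \<and> length q = length [v]"
    then show "q = [v]" using a unfolding is_path_def by simp
  next
    fix i :: nat assume "Suc i < length [v]"
    then show "mult G ([v] ! i) ([v] ! Suc i) = 1" by simp
  qed
qed

lemma usp_finite: "wf_graph G \<Longrightarrow> finite {p. usp_path G p}"
proof -
  assume w: "wf_graph G"
  have "{p. usp_path G p} \<subseteq> {xs. set xs \<subseteq> verts G \<and> length xs \<le> card (verts G)}"
  proof
    fix p assume "p \<in> {p. usp_path G p}"
    then have "set p \<subseteq> verts G" "distinct p" unfolding usp_path_def is_path_def by auto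
    moreover have "finite (verts G)" using w unfolding wf_graph_def by auto
    ultimately have "card (set p) \<le> card (verts G)" by (intro card_mono)
    then have "length p \<le> card (verts G)" using distinct_card[OF \<open>distinct p\<close>] by simp
    then show "p \<in> {xs. set xs \<subseteq> verts G \<and> length xs \<le> card (verts G)}"
      using \<open>set p \<subseteq> verts G\<close> by simp
  qed
  moreover have "finite {xs. set xs \<subseteq> verts G \<and> length xs \<le> card (verts G)}"
    using w unfolding wf_graph_def by (intro finite_lists_length_le) simp
  ultimately show ?thesis by (rule finite_subset)
qed

lemma usp_attained: assumes "wf_graph G"
  shows "\<exists>p. usp_path G p \<and> usp G = length p" "usp G \<ge> 1"
proof -
  obtain v where v: "v \<in> verts G" using assms unfolding wf_graph_def by blast
  have f: "finite (length ` {p. usp_path G p})" using usp_finite[OF assms] by simp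
  have ne: "length ` {p. usp_path G p} \<noteq> {}" using usp_single[OF v] by blast
  show "\<exists>p. usp_path G p \<and> usp G = length p"
    using Max_in[OF f ne] unfolding usp_def by auto
  have "length [v] \<le> usp G" unfolding usp_def using usp_single[OF v] f by (intro Max_ge) (auto intro!: image_eqI[of _ length "[v]"])
  then show "usp G \<ge> 1" by simp
qed


definition consec :: "nat set \<Rightarrow> (nat \<Rightarrow> nat) \<Rightarrow> nat \<Rightarrow> nat \<Rightarrow> bool" where
  "consec Q pos x y \<longleftrightarrow> (\<forall>z\<in>Q. \<not> (pos x < pos z \<and> pos z < pos y) \<and> \<not> (pos y < pos z \<and> pos z < pos x))"

definition lin_ok :: "mgraph \<Rightarrow> nat set \<Rightarrow> (nat \<Rightarrow> nat) \<Rightarrow> bool" where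
  "lin_ok G Q pos \<longleftrightarrow> Q \<subseteq> verts G \<and> inj_on pos Q \<and>
     (\<forall>x\<in>Q. \<forall>y\<in>Q. mult G x y \<le> 1 \<and> (mult G x y > 0 \<longrightarrow> consec Q pos x y))"

definition Inv :: "mgraph \<Rightarrow> nat \<Rightarrow> bool" where
  "Inv G r \<longleftrightarrow> wf_graph G \<and> (\<exists>Q pos. lin_ok G Q pos \<and> card (verts G - Q) \<le> r)"

lemma consec_sub: "consec Q pos x y \<Longrightarrow> Q' \<subseteq> Q \<Longrightarrow> consec Q' pos x y"
  unfolding consec_def by blast

lemma consec_sym: "consec Q pos x y \<Longrightarrow> consec Q pos y x"
  unfolding consec_def by blast

lemma three: "a \<in> Q \<Longrightarrow> b \<in> Q \<Longrightarrow> c \<in> Q \<Longrightarrow> a \<noteq> b \<Longrightarrow> b \<noteq> c \<Longrightarrow> a \<noteq> c \<Longrightarrow>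
  inj_on pos Q \<Longrightarrow> consec Q pos a b \<Longrightarrow> consec Q pos b c \<Longrightarrow> consec Q pos a c \<Longrightarrow> False"
proof -
  assume h: "a \<in> Q" "b \<in> Q" "c \<in> Q" "a \<noteq> b" "b \<noteq> c" "a \<noteq> c" "inj_on pos Q"
    "consec Q pos a b" "consec Q pos b c" "consec Q pos a c"
  have d: "pos a \<noteq> pos b" "pos b \<noteq> pos c" "pos a \<noteq> pos c"
    using h(1-7) unfolding inj_on_def by blast+
  have "\<not> (pos a < pos c \<and> pos c < pos b) \<and> \<not> (pos b < pos c \<and> pos c < pos a)"
    using h(8) h(3) unfolding consec_def by blast
  moreover have "\<not> (pos b < pos a \<and> pos a < pos c) \<and> \<not> (pos c < pos a \<and> pos a < pos b)"
    using h(9) h(1) unfolding consec_def by blast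
  moreover have "\<not> (pos a < pos b \<and> pos b < pos c) \<and> \<not> (pos c < pos b \<and> pos b < pos a)"
    using h(10) h(2) unfolding consec_def by blast
  ultimately show False using d by linarith
qed

lemma merge: "u \<in> Q \<Longrightarrow> v \<in> Q \<Longrightarrow> y \<in> Q \<Longrightarrow> u \<noteq> v \<Longrightarrow> v \<noteq> y \<Longrightarrow> u \<noteq> y \<Longrightarrow>
  inj_on pos Q \<Longrightarrow> consec Q pos u v \<Longrightarrow> consec Q pos v y \<Longrightarrow> consec (Q - {v}) pos u y"
proof -
  assume h: "u \<in> Q" "v \<in> Q" "y \<in> Q" "u \<noteq> v" "v \<noteq> y" "u \<noteq> y" "inj_on pos Q"
    "consec Q pos u v" "consec Q pos v y"
  have d: "pos u \<noteq> pos v" "pos v \<noteq> pos y" "pos u \<noteq> pos y"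
    using h(1-7) unfolding inj_on_def by blast+
  have a: "\<not> (pos u < pos y \<and> pos y < pos v) \<and> \<not> (pos v < pos y \<and> pos y < pos u)"
    using h(8) h(3) unfolding consec_def by blast
  have b: "\<not> (pos v < pos u \<and> pos u < pos y) \<and> \<not> (pos y < pos u \<and> pos u < pos v)"
    using h(9) h(1) unfolding consec_def by blast
  show ?thesis unfolding consec_def
  proof
    fix z assume z: "z \<in> Q - {v}"
    then have "pos z \<noteq> pos v" using h(2,7) unfolding inj_on_def by blast
    moreover have "\<not> (pos u < pos z \<and> pos z < pos v) \<and> \<not> (pos v < pos z \<and> pos z < pos u)"
      using h(8) z unfolding consec_def by blast
    moreover have "\<not> (pos v < pos z \<and> pos z < pos y) \<and> \<not> (pos y < pos z \<and> pos z < pos v)"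
      using h(9) z unfolding consec_def by blast
    ultimately show "\<not> (pos u < pos z \<and> pos z < pos y) \<and> \<not> (pos y < pos z \<and> pos z < pos u)"
      using a b d by linarith
  qed
qed


lemma shortcut:
  assumes p: "is_path G P" and ij: "Suc i < j" "j < length P" and e: "mult G (P!i) (P!j) > 0"
  shows "is_path G (take (Suc i) P @ drop j P) \<and> hd (take (Suc i) P @ drop j P) = hd P \<and>
         last (take (Suc i) P @ drop j P) = last P \<and> length (take (Suc i) P @ drop j P) < length P"
proof -
  let ?q = "take (Suc i) P @ drop j P"
  have d: "distinct P" "set P \<subseteq> verts G" and adj: "\<And>k. Suc k < length P \<Longrightarrow> mult G (P!k) (P!Suc k) > 0"
    using p unfolding is_path_def by auto
  have dq: "distinct ?q"
    using distinct_take[OF d(1)] distinct_drop[OF d(1)] set_take_disj_set_drop_if_distinct[OF d(1), of "Suc i" j] ij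
    by simp
  have "set ?q \<subseteq> set P" using set_take_subset set_drop_subset by (metis Un_least set_append)
  then have sq: "set ?q \<subseteq> verts G" using d(2) by (rule subset_trans)
  have lt: "length (take (Suc i) P) = Suc i" using ij by simp
  have lq: "length ?q = Suc i + (length P - j)" using ij by simp
  have nq: "?q ! k = (if k < Suc i then P ! k else P ! (j + (k - Suc i)))" if "k < length ?q" for k
    using that lt ij by (auto simp: nth_append)
  have aq: "mult G (?q!k) (?q!Suc k) > 0" if k: "Suc k < length ?q" for k
  proof -
    consider "Suc k < Suc i" | "k = i" | "k > i" by linarith
    then show ?thesis
    proof cases
      case 1
      then have "?q!k = P!k" "?q!Suc k = P!Suc k" using nq[of k] nq[of "Suc k"] k by auto
      then show ?thesis using adj[of k] 1 ij by simp
    next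
      case 2
      then have "?q!k = P!i" "?q!Suc k = P!j" using nq[of k] nq[of "Suc k"] k by auto
      then show ?thesis using e by simp
    next
      case 3
      obtain t where t: "k = Suc i + t" using 3 less_iff_Suc_add by auto
      have "?q!k = P!(j + t)" using nq[of k] k t by simp
      moreover have "?q!Suc k = P!(Suc (j + t))" using nq[of "Suc k"] k t by simp
      ultimately have "?q!k = P!(j + (k - Suc i))" "?q!Suc k = P!Suc (j + (k - Suc i))"
        using t by simp_all
      moreover have "Suc (j + (k - Suc i)) < length P" using k 3 lq by simp
      ultimately show ?thesis using adj by simp
    qed
  qed
  have "?q \<noteq> []" using ij by simp
  then have "is_path G ?q" using dq sq aq unfolding is_path_def by blast
  moreover have "hd ?q = hd P"
  proof -
    have "hd ?q = ?q ! 0" using \<open>?q \<noteq> []\<close> by (rule hd_conv_nth)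
    also have "\<dots> = P ! 0" using nq[of 0] \<open>?q \<noteq> []\<close> by simp
    also have "\<dots> = hd P" using ij by (intro hd_conv_nth[symmetric]) auto
    finally show ?thesis .
  qed
  moreover have "last ?q = last P"
  proof -
    have "drop j P \<noteq> []" using ij by simp
    then have "last ?q = last (drop j P)" by simp
    also have "\<dots> = last P" using ij by (simp add: last_drop)
    finally show ?thesis .
  qed
  moreover have "length ?q < length P" using ij by simp
  ultimately show ?thesis by blast
qed


lemma nonadj_zero:
  assumes u: "usp_path G P" and ij: "Suc i < j" "j < length P"
  shows "mult G (P!i) (P!j) = 0"
proof (rule ccontr)
  assume "mult G (P!i) (P!j) \<noteq> 0"
  then have "mult G (P!i) (P!j) > 0" by simp
  from shortcut[OF _ ij this] u show False unfolding usp_path_def by (meson leD)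
qed

lemma Inv_init:
  assumes w: "wf_graph H" and u: "usp_path H P"
  shows "Inv H (card (verts H) - length P)"
proof -
  have p: "is_path H P" using u unfolding usp_path_def by auto
  have d: "distinct P" "set P \<subseteq> verts H" using p unfolding is_path_def by auto
  have sym: "\<And>x y. mult H x y = mult H y x" and irr: "\<And>x. mult H x x = 0"
    using w unfolding wf_graph_def by auto
  define pos where "pos = (\<lambda>x. THE i. i < length P \<and> P!i = x)"
  have posP: "pos (P!i) = i" if "i < length P" for i
    unfolding pos_def using that d(1) by (auto intro!: the_equality simp: nth_eq_iff_index_eq)
  have one: "mult H (P!i) (P!Suc i) = 1" if "Suc i < length P" for i
    using u that unfolding usp_path_def by auto
  have key: "mult H x y \<le> 1 \<and> (mult H x y > 0 \<longrightarrow> consec (set P) pos x y)"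
    if x: "x \<in> set P" and y: "y \<in> set P" for x y
  proof -
    obtain i j where i: "i < length P" "x = P!i" and j: "j < length P" "y = P!j"
      using x y by (metis in_set_conv_nth)
    have cz: "consec (set P) pos x y" if "j = Suc i \<or> i = Suc j"
    proof -
      have "\<exists>k. pos z = k \<and> k < length P \<and> z = P!k" if "z \<in> set P" for z
        using that posP by (metis in_set_conv_nth)
      then show ?thesis using that i j posP unfolding consec_def by fastforce
    qed
    consider "j = Suc i" | "i = Suc j" | "i = j" | "Suc i < j" | "Suc j < i" by linarith
    then show ?thesis
    proof cases
      case 1 then show ?thesis using one i j cz by simp
    next
      case 2 then show ?thesis using one i j cz sym by simp
    next
      case 3 then show ?thesis using i j irr by simp
    next
      case 4 then show ?thesis using nonadj_zero[OF u 4 j(1)] i j by simp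
    next
      case 5 then show ?thesis using nonadj_zero[OF u 5 i(1)] i j sym by simp
    qed
  qed
  have inj: "inj_on pos (set P)"
    by (rule inj_onI) (metis in_set_conv_nth posP)
  have "lin_ok H (set P) pos" unfolding lin_ok_def using d inj key by blast
  moreover have "card (verts H - set P) = card (verts H) - length P"
    using d w unfolding wf_graph_def by (simp add: card_Diff_subset distinct_card finite_subset)
  ultimately show ?thesis unfolding Inv_def using w by fastforce
qed


lemma Inv_step:
  assumes st: "minor_step A B" and I: "Inv A r"
  shows "Inv B r"
proof -
  have wA: "wf_graph A" using I unfolding Inv_def by auto
  then have wB: "wf_graph B" using wf_step st by blast
  obtain Q pos where L: "lin_ok A Q pos" and c: "card (verts A - Q) \<le> r"
    using I unfolding Inv_def by auto
  have fin: "finite (verts A)" and sym: "\<And>x y. mult A x y = mult A y x"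
    and irr: "\<And>x. mult A x x = 0"
    and supp: "\<And>x y. mult A x y > 0 \<Longrightarrow> x \<in> verts A \<and> y \<in> verts A"
    using wA unfolding wf_graph_def by auto
  have QV: "Q \<subseteq> verts A" and inj: "inj_on pos Q"
    and Lm: "\<And>x y. x \<in> Q \<Longrightarrow> y \<in> Q \<Longrightarrow> mult A x y \<le> 1"
    and Lc: "\<And>x y. x \<in> Q \<Longrightarrow> y \<in> Q \<Longrightarrow> mult A x y > 0 \<Longrightarrow> consec Q pos x y"
    using L unfolding lin_ok_def by auto
  from st show ?thesis
  proof cases
    case (del_vertex v)
    have "lin_ok B (Q - {v}) pos" unfolding lin_ok_def using del_vertex QV inj Lm
      by (auto intro: inj_on_subset consec_sub[OF Lc, of _ _ "Q - {v}"])
    moreover have "card (verts B - (Q - {v})) \<le> r"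
    proof -
      have "verts B - (Q - {v}) \<subseteq> verts A - Q" using del_vertex by auto
      then show ?thesis using c fin by (meson card_mono finite_Diff le_trans)
    qed
    ultimately show ?thesis unfolding Inv_def using wB by blast
  next
    case (del_edge u v)
    have "lin_ok B Q pos" unfolding lin_ok_def using del_edge QV inj Lm Lc
      by (auto intro: le_trans[OF diff_le_self])
    then show ?thesis unfolding Inv_def using wB c del_edge by auto
  next
    case (contr_edge u v)
    have uv: "u \<noteq> v" "u \<in> verts A" "v \<in> verts A" using contr_edge irr supp
      by (metis zero_neq_one, metis zero_less_one, metis zero_less_one)
    have vB: "verts B = verts A - {v}" using contr_edge unfolding contract_def by simp
    have mB: "\<And>x y. mult B x y = (if x = v \<or> y = v \<or> x = y then 0
                   else mult A x y + (if x = u then mult A v y else 0)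
                                   + (if y = u then mult A x v else 0))"
      using contr_edge unfolding contract_def by simp
    show ?thesis
    proof (cases "u \<in> Q \<and> v \<in> Q")
      case True
      have cuv: "consec Q pos u v" using Lc True contr_edge by simp
      have gen: "mult A u y + mult A v y \<le> 1 \<and> (mult A u y + mult A v y > 0 \<longrightarrow> consec (Q - {v}) pos u y)"
        if y: "y \<in> Q" "y \<noteq> v" "y \<noteq> u" for y
      proof -
        have n2: "\<not> (mult A u y > 0 \<and> mult A v y > 0)"
        proof
          assume h: "mult A u y > 0 \<and> mult A v y > 0"
          then have "consec Q pos u y" "consec Q pos v y" using Lc True y by auto
          then show False using three[of u Q v y pos] True y uv(1) inj cuv by blast
        qed
        have "mult A u y \<le> 1" "mult A v y \<le> 1" using Lm True y by auto
        then have "mult A u y + mult A v y \<le> 1" using n2 by linarith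
        moreover have "consec (Q - {v}) pos u y" if "mult A u y + mult A v y > 0"
        proof (cases "mult A u y > 0")
          case True
          then show ?thesis using Lc \<open>u \<in> Q \<and> v \<in> Q\<close> y consec_sub by blast
        next
          case False
          then have "mult A v y > 0" using that by simp
          then have "consec Q pos v y" using Lc \<open>u \<in> Q \<and> v \<in> Q\<close> y by auto
          then show ?thesis using merge[of u Q v y pos] \<open>u \<in> Q \<and> v \<in> Q\<close> y uv(1) inj cuv by blast
        qed
        ultimately show ?thesis by blast
      qed
      have "lin_ok B (Q - {v}) pos"
        unfolding lin_ok_def
      proof (intro conjI)
        show "Q - {v} \<subseteq> verts B" using QV vB by auto
        show "inj_on pos (Q - {v})" using inj by (rule inj_on_subset) auto
      next
        show "\<forall>x\<in>Q - {v}. \<forall>y\<in>Q - {v}. mult B x y \<le> 1 \<and> (0 < mult B x y \<longrightarrow> consec (Q - {v}) pos x y)"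
        proof (intro ballI)
        fix x y assume x: "x \<in> Q - {v}" and y: "y \<in> Q - {v}"
        show "mult B x y \<le> 1 \<and> (0 < mult B x y \<longrightarrow> consec (Q - {v}) pos x y)"
        proof (cases "x = y")
          case True then show ?thesis using mB by simp
        next
          case False
          show ?thesis
          proof (cases "x = u")
            case True
            then show ?thesis using gen[of y] x y False mB by auto
          next
            case xu: False
            show ?thesis
            proof (cases "y = u")
              case True
              then have "mult B x y = mult A u x + mult A v x" using mB x y False xu sym by auto
              then show ?thesis using gen[of x] x y False xu True consec_sym by auto
            next
              case False
              then have "mult B x y = mult A x y" using mB x y xu \<open>x \<noteq> y\<close> by auto
              then show ?thesis using Lm Lc x y consec_sub[of Q pos x y "Q - {v}"] by auto
            qed
          qed
        qed
        qed
      qed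
      moreover have "card (verts B - (Q - {v})) \<le> r"
      proof -
        have "verts B - (Q - {v}) \<subseteq> verts A - Q" using vB by auto
        then show ?thesis using c fin by (meson card_mono finite_Diff le_trans)
      qed
      ultimately show ?thesis unfolding Inv_def using wB by blast
    next
      case False
      have "lin_ok B (Q - {u, v}) pos"
        unfolding lin_ok_def
      proof (intro conjI)
        show "Q - {u, v} \<subseteq> verts B" using QV vB by auto
        show "inj_on pos (Q - {u, v})" using inj by (rule inj_on_subset) auto
      next
        show "\<forall>x\<in>Q - {u, v}. \<forall>y\<in>Q - {u, v}. mult B x y \<le> 1 \<and> (0 < mult B x y \<longrightarrow> consec (Q - {u, v}) pos x y)"
        proof (intro ballI)
        fix x y assume x: "x \<in> Q - {u, v}" and y: "y \<in> Q - {u, v}"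
        have eqm: "mult B x y = (if x = y then 0 else mult A x y)" using mB[of x y] x y by auto
        have "mult B x y \<le> mult A x y" using eqm by simp
        moreover have "mult B x y > 0 \<Longrightarrow> mult A x y > 0" using eqm by (simp split: if_splits)
        ultimately show "mult B x y \<le> 1 \<and> (0 < mult B x y \<longrightarrow> consec (Q - {u, v}) pos x y)"
          using Lm Lc x y consec_sub[of Q pos x y "Q - {u, v}"] by (meson DiffD1 Diff_subset le_trans)
        qed
      qed
      moreover have "card (verts B - (Q - {u, v})) \<le> r"
      proof (cases "u \<in> Q")
        case True
        then have vn: "v \<in> verts A - Q" using False uv by auto
        have "verts B - (Q - {u, v}) \<subseteq> insert u ((verts A - Q) - {v})" using vB by auto
        then have "card (verts B - (Q - {u, v})) \<le> card (insert u ((verts A - Q) - {v}))"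
          using fin by (intro card_mono) auto
        also have "\<dots> \<le> Suc (card ((verts A - Q) - {v}))" using fin by (simp add: card_insert_le_m1)
        also have "\<dots> = card (verts A - Q)" using vn fin
          by (metis card_Suc_Diff1 finite_Diff)
        finally show ?thesis using c by linarith
      next
        case uQ: False
        have "verts B - (Q - {u, v}) \<subseteq> verts A - Q" using vB uQ by auto
        then show ?thesis using c fin by (meson card_mono finite_Diff le_trans)
      qed
      ultimately show ?thesis unfolding Inv_def using wB by blast
    qed
  qed
qed

lemma Inv_steps: "minor_step\<^sup>*\<^sup>* A B \<Longrightarrow> Inv A r \<Longrightarrow> Inv B r"
  by (induction rule: rtranclp_induct) (auto intro: Inv_step)


lemma main_bound:
  assumes m: "m \<ge> 2" and sat: "saturated_parade m K" and w: "wf_graph H" and mi: "is_minor K H"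
  shows "card (verts K) - 1 \<le> sp H"
proof -
  obtain P where P: "usp_path H P" "usp H = length P" using usp_attained[OF w] by blast
  obtain G' where st: "minor_step\<^sup>*\<^sup>* H G'" and iso: "iso G' K" using mi unfolding is_minor_def by blast
  have "Inv G' (card (verts H) - length P)" using Inv_steps[OF st Inv_init[OF w P(1)]] .
  then obtain Q pos where wG: "wf_graph G'" and L: "lin_ok G' Q pos"
    and c: "card (verts G' - Q) \<le> card (verts H) - length P" unfolding Inv_def by blast
  obtain f where f: "bij_betw f (verts G') (verts K)"
    and fm: "\<forall>x\<in>verts G'. \<forall>y\<in>verts G'. mult K (f x) (f y) = mult G' x y"
    using iso unfolding iso_def by blast
  have fin: "finite (verts G')" using wG unfolding wf_graph_def by auto
  have QV: "Q \<subseteq> verts G'" using L unfolding lin_ok_def by auto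
  have "\<forall>a\<in>Q. \<forall>b\<in>Q. a = b"
  proof (intro ballI, rule ccontr)
    fix a b assume a: "a \<in> Q" and b: "b \<in> Q" and ne: "a \<noteq> b"
    have "f a \<noteq> f b" using f a b ne QV unfolding bij_betw_def by (meson inj_onD subsetD)
    moreover have "f a \<in> verts K" "f b \<in> verts K" using f a b QV bij_betwE by blast+
    ultimately have "mult K (f a) (f b) = m" using sat unfolding saturated_parade_def by blast
    moreover have "mult G' a b \<le> 1" using L a b unfolding lin_ok_def by blast
    moreover have "mult K (f a) (f b) = mult G' a b" using fm a b QV by blast
    ultimately show False using m by linarith
  qed
  then have cQ: "card Q \<le> 1" using card_le_Suc0_iff_eq[OF finite_subset[OF QV fin]] by simp
  have "card (verts G') - card Q \<le> card (verts G' - Q)"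
    using diff_card_le_card_Diff[OF finite_subset[OF QV fin]] .
  moreover have "card (verts G') = card (verts K)" using bij_betw_same_card[OF f] .
  ultimately show ?thesis using c cQ P(2) unfolding sp_def by linarith
qed

lemma iso_refl: "iso G G"
  unfolding iso_def by (rule exI[of _ id]) auto

lemma minor_refl: "is_minor G G"
  unfolding is_minor_def using iso_refl by blast

lemma sp_floor_sat:
  assumes m: "m \<ge> 2" and w: "wf_graph K" and sat: "saturated_parade m K"
  shows "sp_floor K = card (verts K) - 1"
  unfolding sp_floor_def
proof (rule Least_equality)
  have "card (verts K) - 1 \<le> sp K" using main_bound[OF m sat w minor_refl] .
  moreover have "sp K \<le> card (verts K) - 1" using usp_attained(2)[OF w] unfolding sp_def by simp
  ultimately show "\<exists>H. wf_graph H \<and> is_minor K H \<and> sp H = card (verts K) - 1"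
    using w minor_refl by (intro exI[of _ K]) auto
next
  fix y assume "\<exists>H. wf_graph H \<and> is_minor K H \<and> sp H = y"
  then show "card (verts K) - 1 \<le> y" using main_bound[OF m sat] by blast
qed

lemma del_seq:
  fixes d :: nat
  shows "\<And>A. finite V \<Longrightarrow> verts A = V \<Longrightarrow> verts B = V \<Longrightarrow> (\<forall>x y. mult B x y \<le> mult A x y) \<Longrightarrow>
    (\<forall>x y. mult A x y = mult A y x) \<Longrightarrow> (\<forall>x y. mult B x y = mult B y x) \<Longrightarrow>
    (\<forall>x y. x \<notin> V \<or> y \<notin> V \<longrightarrow> mult A x y = mult B x y) \<Longrightarrow>
    (\<Sum>p\<in>V \<times> V. mult A (fst p) (snd p) - mult B (fst p) (snd p)) = d \<Longrightarrow>
    minor_step\<^sup>*\<^sup>* A B"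
proof (induction d rule: less_induct)
  case (less d A)
  show ?case
  proof (cases "\<exists>x\<in>V. \<exists>y\<in>V. mult B x y < mult A x y")
    case False
    then have "mult A = mult B" using less.prems(4,7) by (intro ext) (meson le_antisym not_le)
    then have "A = B" using less.prems(2,3) by (intro mgraph.equality) auto
    then show ?thesis by simp
  next
    case True
    then obtain x y where xy: "x \<in> V" "y \<in> V" "mult B x y < mult A x y" by blast
    define A' where "A' = \<lparr> verts = verts A,
           mult = (\<lambda>a b. if (a = x \<and> b = y) \<or> (a = y \<and> b = x) then mult A a b - 1
                          else mult A a b) \<rparr>"
    have st: "minor_step A A'" unfolding A'_def using xy(3) by (intro minor_step.del_edge) simp
    have le: "\<forall>a b. mult B a b \<le> mult A' a b"
    proof (intro allI)
      fix a b
      show "mult B a b \<le> mult A' a b"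
      proof (cases "(a = x \<and> b = y) \<or> (a = y \<and> b = x)")
        case True
        then have "mult B a b < mult A a b" using xy(3) less.prems(5,6) by auto
        then show ?thesis unfolding A'_def using True by simp
      next
        case False
        then show ?thesis unfolding A'_def using less.prems(4) by auto
      qed
    qed
    let ?f = "\<lambda>C p. mult C (fst p) (snd p) - mult B (fst p) (snd p)"
    have "(\<Sum>p\<in>V \<times> V. ?f A' p) < (\<Sum>p\<in>V \<times> V. ?f A p)"
    proof (rule sum_strict_mono_ex1)
      show "finite (V \<times> V)" using less.prems(1) by simp
      show "\<forall>p\<in>V \<times> V. ?f A' p \<le> ?f A p" unfolding A'_def by auto
      show "\<exists>p\<in>V \<times> V. ?f A' p < ?f A p" using xy unfolding A'_def by (intro bexI[of _ "(x, y)"]) auto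
    qed
    then have lt: "(\<Sum>p\<in>V \<times> V. ?f A' p) < d" using less.prems(8) by simp
    have "minor_step\<^sup>*\<^sup>* A' B"
      apply (rule less.IH[OF lt less.prems(1) _ less.prems(3) le _ less.prems(6) _ refl])
      using less.prems(2,5,7) xy(1,2) unfolding A'_def by auto
    with st show ?thesis by (rule converse_rtranclp_into_rtranclp)
  qed
qed

theorem lemma7p5:
  fixes m n :: nat and G :: mgraph
  assumes "m \<ge> 2" and "wf_graph G"
  shows "minor_maximal n m G \<longleftrightarrow> (card (verts G) = n \<and> saturated_parade m G)"
proof -
  have m: "m \<ge> 2" and w: "wf_graph G" using assms by auto
  have fin: "finite (verts G)" and ne: "verts G \<noteq> {}" and sym: "\<And>x y. mult G x y = mult G y x"
    and irr: "\<And>x. mult G x x = 0"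
    and supp: "\<And>x y. mult G x y > 0 \<Longrightarrow> x \<in> verts G \<and> y \<in> verts G"
    using w unfolding wf_graph_def by auto
  show ?thesis
  proof
    assume mm: "minor_maximal n m G"
    then have ic: "in_class n m G" unfolding minor_maximal_def by auto
    then have cn: "card (verts G) = n" and le: "\<And>u v. mult G u v \<le> m" unfolding in_class_def by auto
    define S where "S = \<lparr> verts = verts G,
        mult = (\<lambda>x y. if x \<in> verts G \<and> y \<in> verts G \<and> x \<noteq> y then m else 0) \<rparr>"
    have z: "\<And>x y. x \<notin> verts G \<or> y \<notin> verts G \<Longrightarrow> mult G x y = 0"
      using supp by (meson neq0_conv)
    have wS: "wf_graph S" unfolding S_def wf_graph_def using fin ne by (auto split: if_splits)
    have satS: "saturated_parade m S" unfolding S_def saturated_parade_def by auto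
    have icS: "in_class n m S" unfolding in_class_def
      using wS cn sp_floor_sat[OF m wS satS] by (auto simp: S_def)
    have "minor_step\<^sup>*\<^sup>* S G"
    proof (rule del_seq[OF fin _ refl _ _ _ _ refl])
      show "verts S = verts G" by (simp add: S_def)
      show "\<forall>x y. mult G x y \<le> mult S x y"
      proof (intro allI)
        fix x y
        show "mult G x y \<le> mult S x y"
        proof (cases "x \<in> verts G \<and> y \<in> verts G \<and> x \<noteq> y")
          case True then show ?thesis using le by (simp add: S_def)
        next
          case False then have "mult G x y = 0" using irr[of x] z[of x y] by (cases "x = y") auto
          then show ?thesis by simp
        qed
      qed
      show "\<forall>x y. mult S x y = mult S y x" unfolding S_def by auto
      show "\<forall>x y. mult G x y = mult G y x" using sym by auto
      show "\<forall>x y. x \<notin> verts G \<or> y \<notin> verts G \<longrightarrow> mult S x y = mult G x y"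
        unfolding S_def using z by auto
    qed
    then have "is_minor G S" unfolding is_minor_def using iso_refl by blast
    then have "iso S G" using mm icS unfolding minor_maximal_def by blast
    then obtain f where f: "bij_betw f (verts G) (verts G)"
      and fm: "\<forall>x\<in>verts G. \<forall>y\<in>verts G. mult G (f x) (f y) = mult S x y"
      unfolding iso_def S_def by auto
    have "saturated_parade m G" unfolding saturated_parade_def
    proof (intro ballI impI)
      fix u v assume u: "u \<in> verts G" and v: "v \<in> verts G" and uv: "u \<noteq> v"
      obtain x where x: "x \<in> verts G" "f x = u" using f u by (metis bij_betw_imp_surj_on imageE)
      obtain y where y: "y \<in> verts G" "f y = v" using f v by (metis bij_betw_imp_surj_on imageE)
      have "x \<noteq> y" using x y uv by auto
      then show "mult G u v = m" using fm x y unfolding S_def by auto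
    qed
    then show "card (verts G) = n \<and> saturated_parade m G" using cn by auto
  next
    assume h: "card (verts G) = n \<and> saturated_parade m G"
    then have cn: "card (verts G) = n" and sat: "saturated_parade m G" by auto
    have leG: "mult G u v \<le> m" for u v
    proof (cases "u \<in> verts G \<and> v \<in> verts G \<and> u \<noteq> v")
      case True then show ?thesis using sat unfolding saturated_parade_def by auto
    next
      case False then show ?thesis using irr supp by (metis le0 not_gr0)
    qed
    have icG: "in_class n m G" unfolding in_class_def
      using w cn leG sp_floor_sat[OF m w sat] by auto
    have "iso H G" if icH: "in_class n m H" and mi: "is_minor G H" for H
    proof -
      have wH: "wf_graph H" and cH: "card (verts H) = n" and leH: "\<And>u v. mult H u v \<le> m"
        using icH unfolding in_class_def by auto
      obtain G' where st: "minor_step\<^sup>*\<^sup>* H G'" and iso: "iso G' G" using mi unfolding is_minor_def by blast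
      have si: "wf_graph G'" "verts G' \<subseteq> verts H"
        "verts G' = verts H \<longrightarrow> (\<forall>x y. mult G' x y \<le> mult H x y)"
        using steps_inv[OF st wH] by auto
      obtain f where f: "bij_betw f (verts G') (verts G)"
        and fm: "\<forall>x\<in>verts G'. \<forall>y\<in>verts G'. mult G (f x) (f y) = mult G' x y"
        using iso unfolding iso_def by blast
      have "card (verts G') = card (verts H)" using bij_betw_same_card[OF f] cn cH by simp
      then have eqV: "verts G' = verts H" using si(2) wH unfolding wf_graph_def
        by (meson card_subset_eq)
      then have leM: "\<And>x y. mult G' x y \<le> mult H x y" using si(3) by auto
      have "\<forall>x\<in>verts H. \<forall>y\<in>verts H. mult G (f x) (f y) = mult H x y"
      proof (intro ballI)
        fix x y assume x: "x \<in> verts H" and y: "y \<in> verts H"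
        show "mult G (f x) (f y) = mult H x y"
        proof (cases "x = y")
          case True
          then show ?thesis using fm x eqV irr wH unfolding wf_graph_def by auto
        next
          case False
          then have "f x \<noteq> f y" using f x y eqV unfolding bij_betw_def by (metis inj_onD)
          moreover have "f x \<in> verts G" "f y \<in> verts G" using f x y eqV bij_betwE by blast+
          ultimately have "mult G (f x) (f y) = m" using sat unfolding saturated_parade_def by blast
          moreover have "mult G (f x) (f y) = mult G' x y" using fm x y eqV by auto
          ultimately show ?thesis using leM[of x y] leH[of x y] by linarith
        qed
      qed
      then show "iso H G" unfolding iso_def using f eqV by auto
    qed
    then show "minor_maximal n m G" unfolding minor_maximal_def using icG by blast
  qed
qed

end
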